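(* For all positive integers $N$, there exists an $N\times N$ real matrix $Q$ with first row $q_1$ satisfying $\|q_1\|_\infty=1$ and $\log_2(\gamma_2(Q))=\Theta(N)$, such that, for any online factorization algorithm for $Q$ in the row arrival model, there exists a time step $t$ for which the factorization value achieved by the algorithm by step $t$ (that is, $\max_{s\le t}\|\ell_s\|_2$) is at least $\sqrt{\frac12\log_2(\gamma_2(Q))}\cdot\gamma_2(Q_t)$, where $Q_t$ is the matrix of the first $t$ rows of $Q$.
   Context: For a matrix, $\|R\|_{1\to2}$ is the maximum $\ell_2$ norm of a column, $\|L\|_{2\to\infty}$ the maximum $\ell_2$ norm of a row, and $\gamma_2(A)=\min\{\|L\|_{2\to\infty}\|R\|_{1\to2}:LR=A\}$. Row arrival model: rows $q_1,q_2,\ldots\in\mathbb{R}^N$ arrive one at a time. The algorithm chooses an initial (possibly empty) matrix $R_0$ with $N$ columns; at step $t$, after receiving $q_t$, it forms $R_t$ by appending rows to $R_{t-1}$ and outputs a row vector $\ell_t$ with $\ell_tR_t=q_t$, where $\|R_t\|_{1\to2}\le1$ at every step. *)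

theory Defs
  imports Complex_Main
begin

text \<open>Matrices are represented as functions nat => nat => real together with
explicit dimensions (only the entries with indices below the dimensions matter);
vectors as functions nat => real with an explicit length.\<close>

definition l2norm :: "nat \<Rightarrow> (nat \<Rightarrow> real) \<Rightarrow> real" where
  "l2norm n v = sqrt (\<Sum>j<n. (v j)\<^sup>2)"

definition inf_norm :: "nat \<Rightarrow> (nat \<Rightarrow> real) \<Rightarrow> real" where
  "inf_norm n v = Max (insert 0 ((\<lambda>j. \<bar>v j\<bar>) ` {..<n}))"

definition norm_2_inf :: "nat \<Rightarrow> nat \<Rightarrow> (nat \<Rightarrow> nat \<Rightarrow> real) \<Rightarrow> real" where
  "norm_2_inf m k L = Max (insert 0 ((\<lambda>i. sqrt (\<Sum>p<k. (L i p)\<^sup>2)) ` {..<m}))"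

definition norm_1_2 :: "nat \<Rightarrow> nat \<Rightarrow> (nat \<Rightarrow> nat \<Rightarrow> real) \<Rightarrow> real" where
  "norm_1_2 k n R = Max (insert 0 ((\<lambda>j. sqrt (\<Sum>p<k. (R p j)\<^sup>2)) ` {..<n}))"

definition gamma2 :: "nat \<Rightarrow> nat \<Rightarrow> (nat \<Rightarrow> nat \<Rightarrow> real) \<Rightarrow> real" where
  "gamma2 m n A = Inf {norm_2_inf m k L * norm_1_2 k n R | k L R.
      \<forall>i<m. \<forall>j<n. (\<Sum>p<k. L i p * R p j) = A i j}"

text \<open>An execution of an online factorization algorithm in the row arrival model
on the N x N matrix Q (rows q_t = Q (t-1), t = 1..N):
r t is the number of rows of R_t, R t is R_t, l t is the output row vector ell_t.\<close>
definition online_run :: "nat \<Rightarrow> (nat \<Rightarrow> nat \<Rightarrow> real) \<Rightarrow> (nat \<Rightarrow> nat) \<Rightarrow>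
    (nat \<Rightarrow> nat \<Rightarrow> nat \<Rightarrow> real) \<Rightarrow> (nat \<Rightarrow> nat \<Rightarrow> real) \<Rightarrow> bool" where
  "online_run N Q r R l \<longleftrightarrow>
     (\<forall>t\<le>N. norm_1_2 (r t) N (R t) \<le> 1) \<and>
     (\<forall>t\<in>{1..N}. r (t - 1) \<le> r t \<and>
        (\<forall>i<r (t - 1). \<forall>j<N. R t i j = R (t - 1) i j) \<and>
        (\<forall>j<N. (\<Sum>p<r t. l t p * R t p j) = Q (t - 1) j))"

end

theory Submission imports Defs "HOL-Analysis.Convex" begin

lemma cs_sum: fixes a b :: "nat \<Rightarrow> real"
  shows "\<bar>\<Sum>p\<in>I. a p * b p\<bar> \<le> sqrt (\<Sum>p\<in>I. (a p)\<^sup>2) * sqrt (\<Sum>p\<in>I. (b p)\<^sup>2)"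
proof -
  have "sqrt ((\<Sum>p\<in>I. a p * b p)\<^sup>2) \<le> sqrt ((\<Sum>p\<in>I. (a p)\<^sup>2) * (\<Sum>p\<in>I. (b p)\<^sup>2))"
    using Cauchy_Schwarz_ineq_sum real_sqrt_le_mono by blast
  then show ?thesis by (simp add: real_sqrt_mult)
qed

lemma maxi_le: assumes "0 \<le> B" "\<And>i. i < (m::nat) \<Longrightarrow> f i \<le> B"
  shows "Max (insert 0 (f ` {..<m})) \<le> (B::real)"
  using assms by (subst Max_le_iff) (auto simp del: image_insert)

lemma maxi_ge: assumes "i < (m::nat)" shows "f i \<le> Max (insert (0::real) (f ` {..<m::nat}))"
  using assms by (intro Max_ge) (simp_all del: image_insert)

lemma maxi_nonneg: "0 \<le> Max (insert (0::real) (f ` {..<m::nat}))"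
  by (intro Max_ge) (simp_all del: image_insert)

definition gset where "gset m n A = {norm_2_inf m k L * norm_1_2 k n R | k L R.
      \<forall>i<m. \<forall>j<n. (\<Sum>p<k. L i p * R p j) = A i j}"

lemma gset_ne: "gset m n A \<noteq> {}"
proof -
  define I where "I = (\<lambda>p j::nat. if p = j then (1::real) else 0)"
  have w: "\<forall>i<m. \<forall>j<n. (\<Sum>p<n. A i p * I p j) = A i j"
  proof (intro allI impI)
    fix i j assume "i < m" "j < n"
    then show "(\<Sum>p<n. A i p * I p j) = A i j"
      unfolding I_def by (subst sum.remove[of _ j]) auto
  qed
  have "norm_2_inf m n A * norm_1_2 n n I \<in> gset m n A"
    unfolding gset_def mem_Collect_eq
    by (rule exI[of _ n], rule exI[of _ A], rule exI[of _ I], intro conjI refl, rule w)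
  then show ?thesis by auto
qed

lemma gset_lb: assumes "x \<in> gset m n A" "i < m" "j < n" shows "\<bar>A i j\<bar> \<le> x"
proof -
  obtain k L R where x: "x = norm_2_inf m k L * norm_1_2 k n R"
    and f: "\<forall>i<m. \<forall>j<n. (\<Sum>p<k. L i p * R p j) = A i j"
    using assms unfolding gset_def by auto
  have "\<bar>A i j\<bar> = \<bar>\<Sum>p<k. L i p * R p j\<bar>" using f assms by simp
  also have "\<dots> \<le> sqrt (\<Sum>p<k. (L i p)\<^sup>2) * sqrt (\<Sum>p<k. (R p j)\<^sup>2)" by (rule cs_sum)
  also have "\<dots> \<le> x" unfolding x norm_2_inf_def norm_1_2_def
    by (intro mult_mono maxi_ge maxi_nonneg assms) (auto intro: sum_nonneg)
  finally show ?thesis .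
qed

lemma gset_nonneg: assumes "x \<in> gset m n A" shows "0 \<le> x"
  using assms unfolding gset_def norm_2_inf_def norm_1_2_def
  by (auto intro!: mult_nonneg_nonneg maxi_nonneg)

lemma gamma2_ge: assumes "i < m" "j < n" shows "\<bar>A i j\<bar> \<le> gamma2 m n A"
  unfolding gamma2_def gset_def[symmetric]
  by (rule cInf_greatest[OF gset_ne]) (use gset_lb assms in blast)

lemma gamma2_nonneg: "0 \<le> gamma2 m n A"
  unfolding gamma2_def gset_def[symmetric]
  by (rule cInf_greatest[OF gset_ne]) (use gset_nonneg in blast)

lemma gamma2_le: assumes "\<forall>i<m. \<forall>j<n. (\<Sum>p<k. L i p * R p j) = A i j"
  shows "gamma2 m n A \<le> norm_2_inf m k L * norm_1_2 k n R"
  unfolding gamma2_def gset_def[symmetric]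
proof (rule cInf_lower)
  show "norm_2_inf m k L * norm_1_2 k n R \<in> gset m n A" using assms unfolding gset_def by auto
  show "bdd_below (gset m n A)" using gset_nonneg by (meson bdd_below.I)
qed

fun hdm :: "nat \<Rightarrow> nat \<Rightarrow> nat \<Rightarrow> real" where
  "hdm 0 i j = 1"
| "hdm (Suc k) i j = hdm k (i mod 2^k) (j mod 2^k) * (if 2^k \<le> i \<and> 2^k \<le> j then -1 else 1)"

lemma hd_sq: "(hdm k i j)\<^sup>2 = 1"
  by (induction k arbitrary: i j) (auto simp: power_mult_distrib)

lemma hd_abs: "\<bar>hdm k i j\<bar> = 1"
  using hd_sq[of k i j] by (simp add: abs_square_eq_1)

lemma hd_row0: "hdm k 0 j = 1"
  by (induction k arbitrary: j) auto

lemma hd_orth: "j < 2^k \<Longrightarrow> j' < 2^k \<Longrightarrow>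
   (\<Sum>i<2^k. hdm k i j * hdm k i j') = (if j = j' then 2^k else 0)"
proof (induction k arbitrary: j j')
  case 0 then show ?case by simp
next
  case (Suc k)
  let ?n = "2^k :: nat"
  define s where "s j = (if ?n \<le> j then -1 else (1::real))" for j
  have split: "{..<2^Suc k} = {..<?n} \<union> (\<lambda>i. i + ?n) ` {..<?n}"
  proof -
    have "{..<2^Suc k} = {..<?n} \<union> {?n..<2^Suc k}" by auto
    moreover have "{?n..<2^Suc k} = (\<lambda>i. i + ?n) ` {..<?n}"
    proof (auto)
      fix x assume "?n \<le> x" "x < 2 * ?n"
      then show "x \<in> (\<lambda>i. i + ?n) ` {..<?n}" by (intro image_eqI[where x="x - ?n"]) auto
    qed
    ultimately show ?thesis by simp
  qed
  have S1: "(\<Sum>i<?n. hdm (Suc k) i j * hdm (Suc k) i j') = (\<Sum>i<?n. hdm k i (j mod ?n) * hdm k i (j' mod ?n))"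
    by (rule sum.cong) auto
  have S2: "(\<Sum>i\<in>(\<lambda>i. i + ?n) ` {..<?n}. hdm (Suc k) i j * hdm (Suc k) i j')
     = s j * s j' * (\<Sum>i<?n. hdm k i (j mod ?n) * hdm k i (j' mod ?n))"
    by (subst sum.reindex) (auto simp: inj_on_def sum_distrib_left s_def intro!: sum.cong)
  have disj: "{..<?n} \<inter> (\<lambda>i. i + ?n) ` {..<?n} = {}" by auto
  have "(\<Sum>i<2^Suc k. hdm (Suc k) i j * hdm (Suc k) i j') =
     (1 + s j * s j') * (\<Sum>i<?n. hdm k i (j mod ?n) * hdm k i (j' mod ?n))"
  proof -
    have "(\<Sum>i<2^Suc k. hdm (Suc k) i j * hdm (Suc k) i j') =
      (\<Sum>i<?n. hdm (Suc k) i j * hdm (Suc k) i j') + (\<Sum>i\<in>(\<lambda>i. i + ?n) ` {..<?n}. hdm (Suc k) i j * hdm (Suc k) i j')"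
      unfolding split by (rule sum.union_disjoint) (use disj in auto)
    then show ?thesis unfolding S1 S2 by (simp add: algebra_simps)
  qed
  also have "\<dots> = (1 + s j * s j') * (if j mod ?n = j' mod ?n then ?n else 0)"
    using Suc.IH[of "j mod ?n" "j' mod ?n"] by simp
  also have "\<dots> = (if j = j' then 2^Suc k else 0)"
  proof (cases "j mod ?n = j' mod ?n")
    case True
    show ?thesis
    proof (cases "j = j'")
      case True then show ?thesis by (simp add: s_def)
    next
      case False
      have "(?n \<le> j) \<noteq> (?n \<le> j')"
      proof
        assume h: "(?n \<le> j) = (?n \<le> j')"
        have "j = j mod ?n + (if ?n \<le> j then ?n else 0)" using Suc.prems
          by (auto simp: le_mod_geq)
        moreover have "j' = j' mod ?n + (if ?n \<le> j' then ?n else 0)" using Suc.prems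
          by (auto simp: le_mod_geq)
        ultimately show False using h True False by (metis)
      qed
      then show ?thesis using True False by (auto simp: s_def)
    qed
  next
    case False
    then have "j \<noteq> j'" by auto
    then show ?thesis using False by simp
  qed
  finally show ?case .
qed


definition Qm :: "nat \<Rightarrow> nat \<Rightarrow> nat \<Rightarrow> real" where
  "Qm k i j = (if i < 2^k \<and> j < 2^k then 2^i * hdm k i j else 0)"

lemma geom: "(\<Sum>p<m. (2::real)^p) = 2^m - 1" by (induction m) auto

lemma gamma2_Qm_le: assumes m: "m = min t (2^k)" "1 \<le> m"
  shows "gamma2 t N' (Qm k) \<le> 2^m / sqrt 2"
proof -
  define L where "L i p = (if p = i \<and> i < 2^k then sqrt (2^i * 2^m) else (0::real))" for i p
  define R where "R p j = (if j < 2^k then sqrt (2^p / 2^m) * hdm k p j else (0::real))" for p j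
  have fact: "\<forall>i<t. \<forall>j<N'. (\<Sum>p<m. L i p * R p j) = Qm k i j"
  proof (intro allI impI)
    fix i j assume i: "i < t" and j: "j < N'"
    show "(\<Sum>p<m. L i p * R p j) = Qm k i j"
    proof (cases "i < m")
      case True
      then have ik: "i < 2^k" using m by auto
      have "(\<Sum>p<m. L i p * R p j) = L i i * R i j"
        using True by (subst sum.remove[of _ i]) (auto simp: L_def intro!: sum.neutral)
      also have "\<dots> = Qm k i j"
      proof -
        have "sqrt (2^i * 2^m) * sqrt (2^i / 2^m) = sqrt ((2::real)^i * 2^i)"
          by (subst real_sqrt_mult[symmetric]) simp
        also have "\<dots> = 2^i" by (simp add: real_sqrt_mult)
        finally show ?thesis using ik by (auto simp: L_def R_def Qm_def)
      qed
      finally show ?thesis .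
    next
      case False
      then have "\<not> i < 2^k" using m i by auto
      then show ?thesis using False by (auto simp: L_def Qm_def intro!: sum.neutral)
    qed
  qed
  have rows: "norm_2_inf t m L \<le> 2^m / sqrt 2"
    unfolding norm_2_inf_def
  proof (rule maxi_le)
    fix i assume i: "i < t"
    show "sqrt (\<Sum>p<m. (L i p)\<^sup>2) \<le> 2^m / sqrt 2"
    proof (cases "i < m")
      case True
      then have ik: "i < 2^k" using m by auto
      have "(\<Sum>p<m. (L i p)\<^sup>2) = (L i i)\<^sup>2"
        using True by (subst sum.remove[of _ i]) (auto simp: L_def intro!: sum.neutral)
      also have "\<dots> = 2^i * 2^m" using ik by (simp add: L_def)
      also have "\<dots> \<le> (2::real)^(m-1) * 2^m" using True by (intro mult_right_mono power_increasing) auto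
      also have "\<dots> = (2^m / sqrt 2)\<^sup>2"
      proof -
        have "(2::real)^m = 2 * 2^(m-1)" using m by (metis One_nat_def Suc_pred less_eq_Suc_le power_Suc)
        then show ?thesis by (simp add: power_divide power2_eq_square)
      qed
      finally show ?thesis by (simp add: real_le_lsqrt)
    next
      case False
      then have "\<forall>p<m. L i p = 0" by (auto simp: L_def)
      then show ?thesis by simp
    qed
  qed simp
  have cols: "norm_1_2 m N' R \<le> 1"
    unfolding norm_1_2_def
  proof (rule maxi_le)
    fix j assume j: "j < N'"
    have "(\<Sum>p<m. (R p j)\<^sup>2) \<le> (\<Sum>p<m. (2::real)^p / 2^m)"
      by (intro sum_mono) (auto simp: R_def power_mult_distrib hd_sq)
    also have "\<dots> = (2^m - 1) / 2^m" by (simp add: sum_divide_distrib[symmetric] geom)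
    also have "\<dots> \<le> 1" by simp
    finally show "sqrt (\<Sum>p<m. (R p j)\<^sup>2) \<le> 1" by simp
  qed simp
  have "gamma2 t N' (Qm k) \<le> norm_2_inf t m L * norm_1_2 m N' R" by (rule gamma2_le[OF fact])
  also have "\<dots> \<le> 2^m / sqrt 2 * 1"
    by (intro mult_mono rows cols) (auto simp: norm_1_2_def intro: maxi_nonneg)
  finally show ?thesis by simp
qed

lemma gamma2_Qm_ge: "2^(2^k - 1) \<le> gamma2 N N (Qm k)" if "2^k \<le> N"
proof -
  have p: "(0::nat) < 2^k" by simp
  have "\<bar>Qm k (2^k - 1) 0\<bar> \<le> gamma2 N N (Qm k)"
    by (rule gamma2_ge) (use that p in linarith)+
  then show ?thesis by (simp add: Qm_def abs_mult hd_abs)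
qed


lemma hd_parseval: "(\<Sum>i<2^k. (\<Sum>j<2^k. v j * hdm k i j)\<^sup>2) = 2^k * (\<Sum>j<(2::nat)^k. (v j)\<^sup>2)"
proof -
  let ?n = "2^k :: nat"
  have "(\<Sum>i<?n. (\<Sum>j<?n. v j * hdm k i j)\<^sup>2) = (\<Sum>i<?n. \<Sum>j<?n. \<Sum>j'<?n. v j * v j' * (hdm k i j * hdm k i j'))"
    by (simp add: power2_eq_square sum_product algebra_simps)
  also have "\<dots> = (\<Sum>j<?n. \<Sum>j'<?n. \<Sum>i<?n. v j * v j' * (hdm k i j * hdm k i j'))"
    by (subst sum.swap, rule sum.cong, simp, rule sum.swap)
  also have "\<dots> = (\<Sum>j<?n. \<Sum>j'<?n. v j * v j' * (if j = j' then (2::real)^k else 0))"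
    by (simp add: hd_orth sum_distrib_left[symmetric])
  also have "\<dots> = (\<Sum>j<?n. v j * v j * (2::real)^k)"
  proof (rule sum.cong)
    fix j assume "j \<in> {..<?n}"
    then show "(\<Sum>j'<?n. v j * v j' * (if j = j' then (2::real)^k else 0)) = v j * v j * (2::real)^k"
      by (subst sum.remove[of _ j]) auto
  qed simp
  finally show ?thesis by (simp add: sum_distrib_left power2_eq_square algebra_simps)
qed

lemma run_prefix: assumes run: "online_run N Q r R l"
  shows "t + d \<le> N \<Longrightarrow> r t \<le> r (t+d) \<and> (\<forall>i<r t. \<forall>j<N. R (t+d) i j = R t i j)"
proof (induction d)
  case 0 then show ?case by simp
next
  case (Suc d)
  have all: "\<forall>t\<in>{1..N}. r (t - 1) \<le> r t \<and>
        (\<forall>i<r (t - 1). \<forall>j<N. R t i j = R (t - 1) i j) \<and>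
        (\<forall>j<N. (\<Sum>p<r t. l t p * R t p j) = Q (t - 1) j)"
    using run unfolding online_run_def by (rule conjunct2)
  have mem: "Suc (t + d) \<in> {1..N}" using Suc.prems by auto
  have h: "r (Suc (t+d) - 1) \<le> r (Suc (t+d)) \<and> (\<forall>i<r (Suc (t+d) - 1). \<forall>j<N. R (Suc (t+d)) i j = R (Suc (t+d) - 1) i j)"
    using bspec[OF all mem] by (elim conjE) (intro conjI)
  then have h1: "r (t+d) \<le> r (Suc (t+d))" and h2: "\<forall>i<r (t+d). \<forall>j<N. R (Suc (t+d)) i j = R (t+d) i j"
    by simp_all
  have IH: "r t \<le> r (t+d)" "\<forall>i<r t. \<forall>j<N. R (t+d) i j = R t i j" using Suc.IH Suc.prems by simp_all
  show ?case
  proof (intro conjI allI impI)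
    show "r t \<le> r (t + Suc d)" using IH(1) h1 by simp
    fix i j assume i: "i < r t" and j: "j < N"
    have "R (Suc (t+d)) i j = R (t+d) i j" using h2 i j IH(1) by simp
    also have "\<dots> = R t i j" using IH(2) i j by simp
    finally show "R (t + Suc d) i j = R t i j" by simp
  qed
qed

lemma online_Qm:
  assumes nN: "2^k \<le> N" and run: "online_run N (Qm k) r R l"
    and hyp: "\<forall>t\<in>{1..N}. Max ((\<lambda>s. l2norm (r s) (l s)) ` {1..t}) < C * gamma2 t N (Qm k)"
  shows "real (2^k) \<le> 2 * C\<^sup>2"
proof -
  let ?n = "2^k :: nat"
  define Z where "Z i = (\<Sum>p<r N. (\<Sum>j<?n. R N p j * hdm k i j)\<^sup>2)" for i
  have Cpos: "C > 0"
  proof -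
    have p: "(1::nat) \<le> 2^k" by simp
    have "1 \<le> N" using nN p by linarith
    then have "1 \<in> {1..N}" by simp
    then have "Max ((\<lambda>s. l2norm (r s) (l s)) ` {1..1}) < C * gamma2 1 N (Qm k)" using hyp by blast
    moreover have "0 \<le> Max ((\<lambda>s. l2norm (r s) (l s)) ` {1..1})" by (simp add: l2norm_def sum_nonneg)
    ultimately have "0 < C * gamma2 1 N (Qm k)" by linarith
    then show ?thesis using gamma2_nonneg[of 1 N "Qm k"] by (metis mult_nonpos_nonneg not_less)
  qed
  have per: "real ?n ^ 2 \<le> 2 * C\<^sup>2 * Z i" if i: "i < ?n" for i
  proof -
    define t where "t = Suc i"
    have tN: "t \<in> {1..N}" using i nN by (auto simp: t_def)
    have l2le: "l2norm (r t) (l t) \<le> C * (2^t / sqrt 2)"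
    proof -
      have "l2norm (r t) (l t) \<le> Max ((\<lambda>s. l2norm (r s) (l s)) ` {1..t})"
        by (rule Max_ge) (auto simp: t_def)
      also have "\<dots> < C * gamma2 t N (Qm k)" using hyp tN by blast
      also have "\<dots> \<le> C * (2^t / sqrt 2)"
        using gamma2_Qm_le[of t t k N] i Cpos by (intro mult_left_mono) (auto simp: t_def)
      finally show ?thesis by simp
    qed
    define y where "y p = (\<Sum>j<?n. R t p j * hdm k i j)" for p
    have "real ?n * 2^i = (\<Sum>j<?n. Qm k i j * hdm k i j)"
      using i by (simp add: Qm_def mult.assoc flip: power2_eq_square add: hd_sq)
    also have "\<dots> = (\<Sum>j<?n. (\<Sum>p<r t. l t p * R t p j) * hdm k i j)"
    proof (rule sum.cong)
      fix j assume "j \<in> {..<?n}"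
      then have "j < N" using nN by auto
      then show "Qm k i j * hdm k i j = (\<Sum>p<r t. l t p * R t p j) * hdm k i j"
        using run tN unfolding online_run_def t_def by auto
    qed simp
    also have "\<dots> = (\<Sum>p<r t. l t p * y p)"
      unfolding y_def by (simp only: sum_distrib_right sum_distrib_left mult.assoc) (rule sum.swap)
    also have "\<dots> \<le> \<bar>\<Sum>p<r t. l t p * y p\<bar>" by simp
    also have "\<dots> \<le> l2norm (r t) (l t) * sqrt (\<Sum>p<r t. (y p)\<^sup>2)"
      unfolding l2norm_def by (rule cs_sum)
    also have "\<dots> \<le> C * (2^t / sqrt 2) * sqrt (Z i)"
    proof (intro mult_mono l2le)
      have pre: "r t \<le> r N \<and> (\<forall>p<r t. \<forall>j<N. R N p j = R t p j)"
        using run_prefix[OF run, of t "N - t"] tN by auto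
      have "(\<Sum>p<r t. (y p)\<^sup>2) = (\<Sum>p<r t. (\<Sum>j<?n. R N p j * hdm k i j)\<^sup>2)"
        unfolding y_def using pre nN by (intro sum.cong refl) (auto intro!: sum.cong)
      also have "\<dots> \<le> Z i" unfolding Z_def using pre by (intro sum_mono2) auto
      finally show "sqrt (\<Sum>p<r t. (y p)\<^sup>2) \<le> sqrt (Z i)" by simp
    qed (use Cpos in \<open>auto intro: sum_nonneg\<close>)
    also have "\<dots> = (C * sqrt 2 * sqrt (Z i)) * 2^i"
    proof -
      have "(2::real)^t / sqrt 2 = (2 / sqrt 2) * 2^i" by (simp add: t_def)
      also have "\<dots> = sqrt 2 * 2^i" by (simp add: real_div_sqrt)
      finally have "(2::real)^t / sqrt 2 = sqrt 2 * 2^i" .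
      then show ?thesis by simp
    qed
    finally have "real ?n \<le> C * sqrt 2 * sqrt (Z i)" by simp
    then have "real ?n ^ 2 \<le> (C * sqrt 2 * sqrt (Z i))^2"
      by (intro power_mono) auto
    also have "\<dots> = 2 * C\<^sup>2 * Z i"
      by (simp add: power_mult_distrib Z_def sum_nonneg)
    finally show ?thesis .
  qed
  have colsum: "(\<Sum>p<r N. (R N p j)\<^sup>2) \<le> 1" if "j < N" for j
  proof -
    have "sqrt (\<Sum>p<r N. (R N p j)\<^sup>2) \<le> norm_1_2 (r N) N (R N)"
      unfolding norm_1_2_def by (rule maxi_ge) fact
    also have "\<dots> \<le> 1" using run unfolding online_run_def by auto
    finally show ?thesis by simp
  qed
  have "(\<Sum>i<?n. Z i) = (\<Sum>p<r N. \<Sum>i<?n. (\<Sum>j<?n. R N p j * hdm k i j)\<^sup>2)"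
    unfolding Z_def by (rule sum.swap)
  also have "\<dots> = (\<Sum>p<r N. ?n * (\<Sum>j<?n. (R N p j)\<^sup>2))"
    by (simp add: hd_parseval)
  also have "\<dots> = ?n * (\<Sum>j<?n. \<Sum>p<r N. (R N p j)\<^sup>2)"
    by (simp only: sum_distrib_left) (rule sum.swap)
  also have "\<dots> \<le> real ?n * (\<Sum>j<?n. (1::real))"
    using colsum nN by (intro mult_left_mono sum_mono) auto
  finally have sumZ: "(\<Sum>i<?n. Z i) \<le> real ?n * real ?n" by simp
  have "real ?n * real ?n ^ 2 = (\<Sum>i<?n. real ?n ^ 2)" by simp
  also have "\<dots> \<le> (\<Sum>i<?n. 2 * C\<^sup>2 * Z i)" by (intro sum_mono per) auto
  also have "\<dots> = 2 * C\<^sup>2 * (\<Sum>i<?n. Z i)" by (simp add: sum_distrib_left)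
  also have "\<dots> \<le> 2 * C\<^sup>2 * (real ?n * real ?n)" by (intro mult_left_mono sumZ) auto
  finally have "real ?n * real ?n * real ?n \<le> 2 * C\<^sup>2 * real ?n * real ?n"
    by (simp add: power2_eq_square algebra_simps)
  then show ?thesis by simp
qed


lemma main_N: assumes N: "N > (0::nat)"
  obtains k where "inf_norm N (Qm k 0) = 1"
    "2 \<le> N \<longrightarrow> 1/4 * real N \<le> log 2 (gamma2 N N (Qm k)) \<and> log 2 (gamma2 N N (Qm k)) \<le> 1 * real N"
    "\<forall>r R l. online_run N (Qm k) r R l \<longrightarrow>
            (\<exists>t\<in>{1..N}.
               Max ((\<lambda>s. l2norm (r s) (l s)) ` {1..t})
                 \<ge> sqrt (1/2 * log 2 (gamma2 N N (Qm k))) * gamma2 t N (Qm k))"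
proof -
  obtain k where k: "2^k \<le> N" "N < 2^(k+1)" using ex_power_ivl1[of 2 N] N by auto
  define n where "n = (2::nat)^k"
  have n1: "1 \<le> n" by (simp add: n_def)
  define G where "G = gamma2 N N (Qm k)"
  have Gle: "G \<le> 2^n / sqrt 2"
    using gamma2_Qm_le[of n N k N] k n1 unfolding G_def n_def by auto
  have Gge: "2^(n-1) \<le> G" using gamma2_Qm_ge[of k N] k unfolding G_def n_def by auto
  have "(0::real) < 2^(n-1)" by simp
  then have Gpos: "0 < G" using Gge by linarith
  have "2^n / sqrt 2 < (2::real)^n"
  proof -
    have "1 < sqrt (2::real)" by simp
    then show ?thesis by (simp add: divide_less_eq)
  qed
  then have "G < 2^n" using Gle by linarith
  then have "log 2 G < log 2 (2^n)"
    using Gpos by (subst log_less_cancel_iff) auto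
  then have logup: "log 2 G < real n" by simp
  have "log 2 (2^(n-1)) \<le> log 2 G"
    using Gge Gpos by (subst log_le_cancel_iff) auto
  then have loglow: "real (n - 1) \<le> log 2 G" by simp
  have lognn: "0 \<le> log 2 G" using loglow by linarith
  have A: "inf_norm N (Qm k 0) = 1"
  proof (rule antisym)
    show "inf_norm N (Qm k 0) \<le> 1" unfolding inf_norm_def
      by (rule maxi_le) (auto simp: Qm_def abs_mult hd_abs)
    have "\<bar>Qm k 0 0\<bar> \<le> inf_norm N (Qm k 0)" unfolding inf_norm_def
      by (rule maxi_ge[where f="\<lambda>j. \<bar>Qm k 0 j\<bar>"]) (use N in auto)
    then show "1 \<le> inf_norm N (Qm k 0)" by (simp add: Qm_def hd_row0)
  qed
  have B: "2 \<le> N \<longrightarrow> 1/4 * real N \<le> log 2 (gamma2 N N (Qm k)) \<and> log 2 (gamma2 N N (Qm k)) \<le> 1 * real N"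
  proof (intro impI conjI)
    assume N2: "2 \<le> N"
    have "N + 1 \<le> 2 * n" using k(2) unfolding n_def by simp
    then have "real (N + 1) \<le> real (2 * n)" by (simp only: of_nat_le_iff)
    then have "real N + 1 \<le> 2 * real n" by simp
    then show "1/4 * real N \<le> log 2 (gamma2 N N (Qm k))"
      using loglow n1 N2 unfolding G_def by (simp add: of_nat_diff)
    show "log 2 (gamma2 N N (Qm k)) \<le> 1 * real N"
    proof -
      have "real n \<le> real N" using k(1) unfolding n_def by (simp only: of_nat_le_iff)
      then show ?thesis using logup unfolding G_def by simp
    qed
  qed
  have C: "\<exists>t\<in>{1..N}. Max ((\<lambda>s. l2norm (r s) (l s)) ` {1..t})
                 \<ge> sqrt (1/2 * log 2 (gamma2 N N (Qm k))) * gamma2 t N (Qm k)"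
    if run: "online_run N (Qm k) r R l" for r R l
  proof (rule ccontr)
    assume "\<not> ?thesis"
    then have "\<forall>t\<in>{1..N}. Max ((\<lambda>s. l2norm (r s) (l s)) ` {1..t}) < sqrt (1/2 * log 2 G) * gamma2 t N (Qm k)"
      unfolding G_def Bex_def Ball_def not_le[symmetric] by blast
    from online_Qm[OF k(1) run this] have "real n \<le> 2 * (sqrt (1/2 * log 2 G))\<^sup>2" unfolding n_def by simp
    also have "\<dots> = log 2 G" using lognn by simp
    finally show False using logup by simp
  qed
  show ?thesis by (rule that[OF A B]) (intro allI impI C)
qed

theorem theorem5p1:
  shows "\<exists>c1 c2 :: real. \<exists>N0 :: nat. c1 > 0 \<and> c2 > 0 \<and>
    (\<forall>N::nat. N > 0 \<longrightarrow>
      (\<exists>Q :: nat \<Rightarrow> nat \<Rightarrow> real.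
         inf_norm N (Q 0) = 1 \<and>
         (N \<ge> N0 \<longrightarrow> c1 * real N \<le> log 2 (gamma2 N N Q) \<and> log 2 (gamma2 N N Q) \<le> c2 * real N) \<and>
         (\<forall>r R l. online_run N Q r R l \<longrightarrow>
            (\<exists>t\<in>{1..N}.
               Max ((\<lambda>s. l2norm (r s) (l s)) ` {1..t})
                 \<ge> sqrt (1/2 * log 2 (gamma2 N N Q)) * gamma2 t N Q))))"
  apply (rule exI[of _ "1/4::real"], rule exI[of _ "1::real"], rule exI[of _ "2::nat"])
  apply (intro conjI allI impI)
    apply simp
   apply simp
  subgoal for N
    apply (erule main_N)
    subgoal for k by (rule exI[of _ "Qm k"], intro conjI) assumption+
    done
  done

end
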